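(* Every ultra-metric space is isometric to a closed subset of an ultra-normed Boolean group (equipped with the metric $(u,v)\mapsto\|u-v\|$).
   Context: An ultra-metric satisfies $d(x,z)\le\max\{d(x,y),d(y,z)\}$. A Boolean group is a group in which every non-identity element has order 2. An ultra-norm on an abelian group is a function $\|\cdot\|\ge0$ with $\|0\|=0$, $\|-u\|=\|u\|$, $\|u+v\|\le\max\{\|u\|,\|v\|\}$ and $\|u\|=0$ only for $u=0$. *)

theory Defs
  imports "HOL-Analysis.Abstract_Metric_Spaces" "HOL-Algebra.Multiplicative_Group"
begin

definition ultrametric_space :: "'a set \<Rightarrow> ('a \<Rightarrow> 'a \<Rightarrow> real) \<Rightarrow> bool" where
  "ultrametric_space X d \<longleftrightarrow> Metric_space X d \<and>
     (\<forall>x\<in>X. \<forall>y\<in>X. \<forall>z\<in>X. d x z \<le> max (d x y) (d y z))"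

definition boolean_group :: "('b, 'c) monoid_scheme \<Rightarrow> bool" where
  "boolean_group G \<longleftrightarrow> group G \<and>
     (\<forall>x\<in>carrier G. x \<noteq> \<one>\<^bsub>G\<^esub> \<longrightarrow> group.ord G x = 2)"

definition ultra_norm :: "('b, 'c) monoid_scheme \<Rightarrow> ('b \<Rightarrow> real) \<Rightarrow> bool" where
  "ultra_norm G N \<longleftrightarrow> comm_group G \<and>
     (\<forall>u\<in>carrier G. N u \<ge> 0) \<and>
     N \<one>\<^bsub>G\<^esub> = 0 \<and>
     (\<forall>u\<in>carrier G. N (inv\<^bsub>G\<^esub> u) = N u) \<and>
     (\<forall>u\<in>carrier G. \<forall>v\<in>carrier G. N (u \<otimes>\<^bsub>G\<^esub> v) \<le> max (N u) (N v)) \<and>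
     (\<forall>u\<in>carrier G. N u = 0 \<longrightarrow> u = \<one>\<^bsub>G\<^esub>)"

definition norm_dist :: "('b, 'c) monoid_scheme \<Rightarrow> ('b \<Rightarrow> real) \<Rightarrow> 'b \<Rightarrow> 'b \<Rightarrow> real" where
  "norm_dist G N u v = N (u \<otimes>\<^bsub>G\<^esub> inv\<^bsub>G\<^esub> v)"

end

theory Submission
  imports Defs
begin

definition sd :: "'a set \<Rightarrow> 'a set \<Rightarrow> 'a set" where
  "sd A B = (A - B) \<union> (B - A)"

definition CC :: "'a set \<Rightarrow> 'a set set" where
  "CC X = {A. finite A \<and> A \<subseteq> X \<and> even (card A)}"

definition Phi :: "'a set \<Rightarrow> 'a set \<Rightarrow> 'a set" where
  "Phi X A = (if A \<in> CC X then A else {})"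

definition BG :: "'a set \<Rightarrow> 'a set monoid" where
  "BG X = \<lparr>carrier = CC X, mult = (\<lambda>A B. sd (Phi X A) (Phi X B)), one = {}\<rparr>"

lemma even_sd:
  assumes "finite U" "finite V" "even (card U)" "even (card V)"
  shows "even (card (sd U V))"
proof -
  have e: "sd U V = (U \<union> V) - (U \<inter> V)" unfolding sd_def by blast
  have "card (sd U V) = card (U \<union> V) - card (U \<inter> V)"
    unfolding e using assms by (subst card_Diff_subset) auto
  moreover have "card U + card V = card (U \<union> V) + card (U \<inter> V)"
    using assms card_Un_Int by blast
  moreover have "card (U \<inter> V) \<le> card (U \<union> V)"
    using assms by (intro card_mono) auto
  ultimately show ?thesis using assms by presburger
qed

lemma CC_sd: "A \<in> CC X \<Longrightarrow> B \<in> CC X \<Longrightarrow> sd A B \<in> CC X"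
  unfolding CC_def using even_sd[of A B] by (auto simp: sd_def)

lemma BG_mult: "A \<in> CC X \<Longrightarrow> B \<in> CC X \<Longrightarrow> A \<otimes>\<^bsub>BG X\<^esub> B = sd A B"
  by (simp add: BG_def Phi_def)

lemma empty_CC[simp]: "{} \<in> CC X" by (simp add: CC_def)

lemma BG_carrier[simp]: "carrier (BG X) = CC X" by (simp add: BG_def)
lemma BG_one[simp]: "\<one>\<^bsub>BG X\<^esub> = {}" by (simp add: BG_def)

lemma BG_comm_group: "comm_group (BG X)"
proof (rule comm_groupI)
  fix x y assume "x \<in> carrier (BG X)" "y \<in> carrier (BG X)"
  then have "x \<in> CC X" "y \<in> CC X" by simp_all
  then show "x \<otimes>\<^bsub>BG X\<^esub> y \<in> carrier (BG X)"
    by (simp add: BG_mult CC_sd)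
next
  fix x y z assume "x \<in> carrier (BG X)" "y \<in> carrier (BG X)" "z \<in> carrier (BG X)"
  then have c: "x \<in> CC X" "y \<in> CC X" "z \<in> CC X" by simp_all
  then show "x \<otimes>\<^bsub>BG X\<^esub> y \<otimes>\<^bsub>BG X\<^esub> z = x \<otimes>\<^bsub>BG X\<^esub> (y \<otimes>\<^bsub>BG X\<^esub> z)"
    by (simp add: BG_mult CC_sd) (auto simp: sd_def)
next
  fix x y assume "x \<in> carrier (BG X)" "y \<in> carrier (BG X)"
  then have c: "x \<in> CC X" "y \<in> CC X" by simp_all
  then show "x \<otimes>\<^bsub>BG X\<^esub> y = y \<otimes>\<^bsub>BG X\<^esub> x"
    by (simp add: BG_mult) (auto simp: sd_def)
qed (auto simp: BG_def Phi_def sd_def)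

lemma BG_group: "group (BG X)"
  using BG_comm_group comm_group.axioms(2) by blast

lemma BG_inv_in: "A \<in> CC X \<Longrightarrow> inv\<^bsub>BG X\<^esub> A = A"
  by (rule group.inv_equality[OF BG_group]) (auto simp: BG_def Phi_def sd_def)

lemma BG_inv_out: "A \<notin> CC X \<Longrightarrow> inv\<^bsub>BG X\<^esub> A = {}"
  unfolding m_inv_def
  by (rule the_equality) (auto simp: BG_def Phi_def sd_def)

lemma BG_boolean: "boolean_group (BG X)"
  unfolding boolean_group_def
proof (intro conjI ballI impI)
  show "group (BG X)" by (rule BG_group)
  fix x assume x: "x \<in> carrier (BG X)" "x \<noteq> \<one>\<^bsub>BG X\<^esub>"
  interpret group "BG X" by (rule BG_group)
  have "x [^]\<^bsub>BG X\<^esub> (2::nat) = \<one>\<^bsub>BG X\<^esub>"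
    using x by (simp add: numeral_2_eq_2 BG_def Phi_def sd_def)
  then have "ord x dvd 2" using pow_eq_id x(1) by blast
  moreover have "ord x \<noteq> 1" using ord_eq_1 x by blast
  ultimately show "ord x = 2"
    using dvd_imp_le[of "ord x" 2] by (cases "ord x = 0") (auto simp: le_Suc_eq numeral_2_eq_2)
qed


definition evn :: "'a set \<Rightarrow> ('a \<Rightarrow> 'a \<Rightarrow> real) \<Rightarrow> 'a set \<Rightarrow> real \<Rightarrow> bool" where
  "evn X d A r = (\<forall>z\<in>X. even (card {a\<in>A. d z a \<le> r}))"

definition good :: "'a set \<Rightarrow> ('a \<Rightarrow> 'a \<Rightarrow> real) \<Rightarrow> 'a set \<Rightarrow> real \<Rightarrow> bool" where
  "good X d A r = (0 \<le> r \<and> (\<forall>s\<ge>r. evn X d A s))"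

definition NN :: "'a set \<Rightarrow> ('a \<Rightarrow> 'a \<Rightarrow> real) \<Rightarrow> 'a set \<Rightarrow> real" where
  "NN X d A = Inf {r. good X d A r}"

context
  fixes X :: "'a set" and d :: "'a \<Rightarrow> 'a \<Rightarrow> real"
  assumes U: "ultrametric_space X d"
begin

lemma MS: "Metric_space X d" using U by (simp add: ultrametric_space_def)

lemma ult: "x \<in> X \<Longrightarrow> y \<in> X \<Longrightarrow> z \<in> X \<Longrightarrow> d x z \<le> max (d x y) (d y z)"
  using U by (simp add: ultrametric_space_def)

lemma dnn: "0 \<le> d x y" using Metric_space.nonneg[OF MS] .
lemma dcom: "d x y = d y x" using Metric_space.commute[OF MS] .
lemma dzero: "x \<in> X \<Longrightarrow> y \<in> X \<Longrightarrow> d x y = 0 \<longleftrightarrow> x = y" using Metric_space.zero[OF MS] .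

lemma good_sd:
  assumes "finite A" "finite B" "good X d A r" "good X d B s"
  shows "good X d (sd A B) (max r s)"
  unfolding good_def evn_def
proof (intro conjI allI impI ballI)
  show "0 \<le> max r s" using assms(3) by (auto simp: good_def le_max_iff_disj)
  fix t z assume t: "max r s \<le> t" and z: "z \<in> X"
  have "{a \<in> sd A B. d z a \<le> t} = sd {a\<in>A. d z a \<le> t} {a\<in>B. d z a \<le> t}"
    by (auto simp: sd_def)
  moreover have "even (card {a\<in>A. d z a \<le> t})" "even (card {a\<in>B. d z a \<le> t})"
    using assms(3,4) t z by (auto simp: good_def evn_def)
  ultimately show "even (card {a \<in> sd A B. d z a \<le> t})"
    using even_sd[of "{a\<in>A. d z a \<le> t}" "{a\<in>B. d z a \<le> t}"] assms(1,2) by simp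
qed

lemma good_exists:
  assumes A: "A \<in> CC X"
  shows "\<exists>r. good X d A r"
proof -
  define r where "r = (\<Sum>a\<in>A. \<Sum>b\<in>A. d a b)"
  have fin: "finite A" and sub: "A \<subseteq> X" and ev: "even (card A)" using A by (auto simp: CC_def)
  have bnd: "d a b \<le> r" if "a \<in> A" "b \<in> A" for a b
  proof -
    have "d a b \<le> (\<Sum>b\<in>A. d a b)" using that fin by (intro member_le_sum) (auto simp: dnn)
    also have "\<dots> \<le> r" unfolding r_def using that fin
      by (intro member_le_sum[where f="\<lambda>a. \<Sum>b\<in>A. d a b"]) (auto intro: sum_nonneg simp: dnn)
    finally show ?thesis .
  qed
  have "0 \<le> r" unfolding r_def by (auto intro!: sum_nonneg simp: dnn)
  moreover have "evn X d A s" if "r \<le> s" for s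
    unfolding evn_def
  proof
    fix z assume z: "z \<in> X"
    show "even (card {a \<in> A. d z a \<le> s})"
    proof (cases "\<exists>a0\<in>A. d z a0 \<le> s")
      case True
      then obtain a0 where a0: "a0 \<in> A" "d z a0 \<le> s" by blast
      have "d z a \<le> s" if "a \<in> A" for a
      proof -
        have "d z a \<le> max (d z a0) (d a0 a)" using ult[of z a0 a] z sub a0 that by auto
        moreover have "d a0 a \<le> s" using bnd[of a0 a] a0 that \<open>r \<le> s\<close> by simp
        ultimately show ?thesis using a0 by simp
      qed
      then have "{a \<in> A. d z a \<le> s} = A" by auto
      then show ?thesis using ev by simp
    next
      case False
      then have e: "{a \<in> A. d z a \<le> s} = {}" by auto
      show ?thesis unfolding e by simp
    qed
  qed
  ultimately show ?thesis unfolding good_def by blast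
qed

lemma NN_le: "good X d A r \<Longrightarrow> NN X d A \<le> r"
  unfolding NN_def by (rule cInf_lower) (auto simp: bdd_below_def good_def)

lemma NN_ge: "A \<in> CC X \<Longrightarrow> (\<And>r. good X d A r \<Longrightarrow> m \<le> r) \<Longrightarrow> m \<le> NN X d A"
  unfolding NN_def using good_exists by (intro cInf_greatest) auto

lemma NN_nonneg: "A \<in> CC X \<Longrightarrow> 0 \<le> NN X d A"
  by (rule NN_ge) (auto simp: good_def)

lemma NN_empty: "NN X d {} = 0"
proof -
  have "good X d {} 0" by (simp add: good_def evn_def)
  then show ?thesis using NN_le[of "{}" 0] NN_nonneg[of "{}"] by simp
qed

lemma NN_isol:
  assumes A: "A \<in> CC X" and b: "b \<in> A" and m: "\<And>y. y \<in> A \<Longrightarrow> y \<noteq> b \<Longrightarrow> m \<le> d b y"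
  shows "m \<le> NN X d A"
proof (rule NN_ge[OF A])
  fix r assume g: "good X d A r"
  show "m \<le> r"
  proof (rule ccontr)
    assume "\<not> m \<le> r"
    then have "r < m" by simp
    have bX: "b \<in> X" using A b by (auto simp: CC_def)
    have "{a\<in>A. d b a \<le> r} = {b}"
      using b m \<open>r < m\<close> g bX by (auto simp: good_def dzero[OF bX bX, THEN iffD2] intro: ccontr)
      (metis linorder_not_le not_le_imp_less order.strict_trans1)
    moreover have "even (card {a\<in>A. d b a \<le> r})" using g bX by (auto simp: good_def evn_def)
    ultimately show False by simp
  qed
qed

lemma NN_pair:
  assumes x: "x \<in> X" and y: "y \<in> X" and xy: "x \<noteq> y"
  shows "NN X d {x, y} = d x y"
proof -
  have "good X d {x,y} r \<longleftrightarrow> d x y \<le> r" for r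
  proof
    assume g: "good X d {x,y} r"
    show "d x y \<le> r"
    proof (rule ccontr)
      assume "\<not> d x y \<le> r"
      then have "{a\<in>{x,y}. d x a \<le> r} = {x}" using g dzero[OF x x] by (auto simp: good_def)
      moreover have "even (card {a\<in>{x,y}. d x a \<le> r})" using g x by (auto simp: good_def evn_def)
      ultimately show False by simp
    qed
  next
    assume r: "d x y \<le> r"
    show "good X d {x,y} r"
      unfolding good_def evn_def
    proof (intro conjI allI impI ballI)
      show "0 \<le> r" using r dnn[of x y] by simp
      fix s z assume s: "r \<le> s" and z: "z \<in> X"
      have "{a\<in>{x,y}. d z a \<le> s} = {} \<or> {a\<in>{x,y}. d z a \<le> s} = {x,y}"
      proof (cases "d z x \<le> s \<or> d z y \<le> s")
        case True
        have "d z y \<le> max (d z x) (d x y)" using ult[OF z x y] .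
        moreover have "d z x \<le> max (d z y) (d y x)" using ult[OF z y x] .
        ultimately have "d z x \<le> s \<and> d z y \<le> s" using True r s dcom[of y x] by auto
        then show ?thesis by auto
      next
        case False then show ?thesis by auto
      qed
      then show "even (card {a\<in>{x,y}. d z a \<le> s})"
      proof (elim disjE)
        assume e: "{a\<in>{x,y}. d z a \<le> s} = {}"
        show ?thesis unfolding e by simp
      next
        assume e: "{a\<in>{x,y}. d z a \<le> s} = {x,y}"
        show ?thesis unfolding e using xy by simp
      qed
    qed
  qed
  then have "{r. good X d {x,y} r} = {d x y..}" by auto
  then show ?thesis unfolding NN_def by simp
qed

lemma NN_ultra:
  assumes A: "A \<in> CC X" and B: "B \<in> CC X"
  shows "NN X d (sd A B) \<le> max (NN X d A) (NN X d B)"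
proof (rule ccontr)
  assume "\<not> ?thesis"
  then have lt: "max (NN X d A) (NN X d B) < NN X d (sd A B)" using not_le by blast
  have bdd: "bdd_below {r. good X d C r}" for C by (auto simp: bdd_below_def good_def)
  obtain r where r: "good X d A r" "r < NN X d (sd A B)"
    using lt good_exists[OF A] cInf_less_iff[OF _ bdd, of A "NN X d (sd A B)"]
    unfolding NN_def by fastforce
  obtain s where s: "good X d B s" "s < NN X d (sd A B)"
    using lt good_exists[OF B] cInf_less_iff[OF _ bdd, of B "NN X d (sd A B)"]
    unfolding NN_def by fastforce
  have "good X d (sd A B) (max r s)" using good_sd r s A B by (auto simp: CC_def)
  then have "NN X d (sd A B) \<le> max r s" by (rule NN_le)
  then show False using r s by simp
qed

lemma NN_zero:
  assumes A: "A \<in> CC X" and z: "NN X d A = 0"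
  shows "A = {}"
proof (rule ccontr)
  assume "A \<noteq> {}"
  then obtain b where b: "b \<in> A" by blast
  have fin: "finite A" and sub: "A \<subseteq> X" using A by (auto simp: CC_def)
  define m where "m = Min (insert 1 ((\<lambda>y. d b y) ` (A - {b})))"
  have "0 < m" unfolding m_def using fin sub b dzero dnn
    by (subst Min_gr_iff) (auto, metis dnn dzero less_eq_real_def subsetD)
  moreover have "m \<le> NN X d A"
    by (rule NN_isol[OF A b]) (auto simp: m_def fin)
  ultimately show False using z by simp
qed

lemma NN_ultra_norm: "ultra_norm (BG X) (NN X d)"
  unfolding ultra_norm_def
  by (auto simp: BG_comm_group NN_nonneg NN_empty BG_inv_in BG_mult NN_ultra NN_zero)

lemma nd_eq: "norm_dist (BG X) N u v = N (sd (Phi X u) (Phi X v))"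
proof -
  have "Phi X (inv\<^bsub>BG X\<^esub> v) = Phi X v"
    by (cases "v \<in> CC X") (auto simp: BG_inv_in BG_inv_out Phi_def)
  then show ?thesis by (simp add: norm_dist_def BG_def)
qed

lemma Phi_CC: "Phi X u \<in> CC X" by (simp add: Phi_def)

lemma MS_BG: "Metric_space (CC X) (norm_dist (BG X) (NN X d))"
proof
  fix x y z
  show "0 \<le> norm_dist (BG X) (NN X d) x y" by (simp add: nd_eq NN_nonneg CC_sd Phi_CC)
  show "norm_dist (BG X) (NN X d) x y = norm_dist (BG X) (NN X d) y x"
    by (simp add: nd_eq sd_def Un_commute)
  assume "x \<in> CC X" "y \<in> CC X"
  then show "(norm_dist (BG X) (NN X d) x y = 0) = (x = y)"
    using NN_zero[OF CC_sd[of x X y]] by (auto simp: nd_eq Phi_def NN_empty sd_def)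
next
  fix x y z assume c: "x \<in> CC X" "y \<in> CC X" "z \<in> CC X"
  have "sd x z = sd (sd x y) (sd y z)" by (auto simp: sd_def)
  then have "NN X d (sd x z) \<le> max (NN X d (sd x y)) (NN X d (sd y z))"
    using NN_ultra[OF CC_sd[OF c(1,2)] CC_sd[OF c(2,3)]] by simp
  also have "\<dots> \<le> NN X d (sd x y) + NN X d (sd y z)"
    using NN_nonneg[OF CC_sd[OF c(1,2)]] NN_nonneg[OF CC_sd[OF c(2,3)]] by simp
  finally show "norm_dist (BG X) (NN X d) x z \<le> norm_dist (BG X) (NN X d) x y + norm_dist (BG X) (NN X d) y z"
    using c by (simp add: nd_eq Phi_def)
qed


definition fmap :: "'a \<Rightarrow> 'a set" where
  "fmap x = sd {x} {SOME x0. x0 \<in> X}"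

lemma fmap_CC: "x \<in> X \<Longrightarrow> fmap x \<in> CC X"
proof -
  assume x: "x \<in> X"
  then have x0: "(SOME x0. x0 \<in> X) \<in> X" by (rule someI)
  show ?thesis
    using x x0 by (cases "x = (SOME x0. x0 \<in> X)") (auto simp: fmap_def sd_def CC_def)
qed

lemma fmap_sd: "sd (fmap x) (fmap y) = sd {x} {y}"
  by (auto simp: fmap_def sd_def)

lemma fmap_iso:
  assumes x: "x \<in> X" and y: "y \<in> X"
  shows "norm_dist (BG X) (NN X d) (fmap x) (fmap y) = d x y"
proof -
  have "norm_dist (BG X) (NN X d) (fmap x) (fmap y) = NN X d (sd {x} {y})"
    using fmap_CC[OF x] fmap_CC[OF y] by (simp add: nd_eq Phi_def fmap_sd)
  also have "\<dots> = d x y"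
  proof (cases "x = y")
    case True then show ?thesis using dzero[OF x x] by (simp add: sd_def NN_empty)
  next
    case False
    then have "sd {x} {y} = {x, y}" by (auto simp: sd_def)
    then show ?thesis using NN_pair[OF x y False] by simp
  qed
  finally show ?thesis .
qed

lemma closed_img: "closedin (Metric_space.mtopology (CC X) (norm_dist (BG X) (NN X d))) (fmap ` X)"
proof -
  interpret M: Metric_space "CC X" "norm_dist (BG X) (NN X d)" by (rule MS_BG)
  show ?thesis
    unfolding M.closedin_metric
  proof (intro conjI allI impI)
    show "fmap ` X \<subseteq> CC X" using fmap_CC by blast
    fix A assume A: "A \<in> CC X - fmap ` X"
    show "\<exists>r>0. disjnt (fmap ` X) (M.mball A r)"
    proof (cases "X = {}")
      case True then show ?thesis by (auto intro: exI[of _ 1])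
    next
      case False
      define x0 where "x0 = (SOME x0. x0 \<in> X)"
      have x0: "x0 \<in> X" unfolding x0_def using False some_in_eq by blast
      define C where "C = sd A {x0}"
      have AC: "A \<in> CC X" using A by simp
      have finC: "finite C" and subC: "C \<subseteq> X" using AC x0 by (auto simp: C_def CC_def sd_def)
      have oddC: "odd (card C)"
      proof (cases "x0 \<in> A")
        case True
        then have "C = A - {x0}" by (auto simp: C_def sd_def)
        moreover have "card A \<ge> 1" using True AC by (auto simp: CC_def card_gt_0_iff Suc_le_eq)
        ultimately show ?thesis using AC True by (auto simp: CC_def)
      next
        case False
        then have "C = insert x0 A" by (auto simp: C_def sd_def)
        then show ?thesis using AC False by (auto simp: CC_def)
      qed
      have "card C \<noteq> 1"
      proof
        assume "card C = 1"
        then obtain c where c: "C = {c}" by (auto simp: card_Suc_eq)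
        then have cX: "c \<in> X" using subC by auto
        have "A = sd C {x0}" by (auto simp: C_def sd_def)
        also have "\<dots> = fmap c" by (simp add: c fmap_def x0_def)
        finally show False using A cX by auto
      qed
      with oddC have "card C \<ge> 2" by presburger
      then obtain c1 c2 where c12: "c1 \<in> C" "c2 \<in> C" "c1 \<noteq> c2"
        by (metis One_nat_def card_2_iff' card_le_Suc0_iff_eq finC not_less_eq_eq numeral_2_eq_2)
      define D where "D = {d a b | a b. a \<in> C \<and> b \<in> C \<and> a \<noteq> b}"
      define m where "m = Min D"
      have finD: "finite D"
      proof -
        have "D \<subseteq> (\<lambda>(a,b). d a b) ` (C \<times> C)" by (auto simp: D_def)
        then show ?thesis using finC finite_subset by blast
      qed
      have "D \<noteq> {}" using c12 by (auto simp: D_def)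
      have mle: "m \<le> d a b" if "a \<in> C" "b \<in> C" "a \<noteq> b" for a b
        unfolding m_def using finD that by (intro Min_le) (auto simp: D_def)
      have mpos: "0 < m"
        unfolding m_def using finD \<open>D \<noteq> {}\<close>
      proof (subst Min_gr_iff)
        show "\<forall>a\<in>D. 0 < a"
          using subC by (auto simp: D_def) (metis dnn dzero less_eq_real_def subsetD)
      qed auto
      have key: "m \<le> NN X d (sd A (fmap x))" if x: "x \<in> X" for x
      proof -
        have Bcc: "sd A (fmap x) \<in> CC X" using CC_sd[OF AC fmap_CC[OF x]] .
        have BC: "sd A (fmap x) = sd C {x}" by (auto simp: C_def fmap_def x0_def sd_def)
        show ?thesis
        proof (cases "x \<in> C")
          case True
          then have B: "sd A (fmap x) = C - {x}" using BC by (auto simp: sd_def)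
          obtain b where b: "b \<in> C" "b \<noteq> x" using c12 by metis
          show ?thesis
            by (rule NN_isol[OF Bcc, of b]) (use B b mle in auto)
        next
          case False
          then have B: "sd A (fmap x) = insert x C" using BC by (auto simp: sd_def)
          have "\<exists>b\<in>C. m \<le> d b x"
          proof (rule ccontr)
            assume "\<not> ?thesis"
            then have "d c1 x < m" "d c2 x < m" using c12 by auto
            moreover have "d c1 c2 \<le> max (d c1 x) (d x c2)"
              using ult[of c1 x c2] subC c12 x by auto
            ultimately show False using mle[OF c12] dcom[of x c2] by auto
          qed
          then obtain b where b: "b \<in> C" "m \<le> d b x" by blast
          have "b \<noteq> x" using b False by auto
          show ?thesis
            by (rule NN_isol[OF Bcc, of b]) (use B b mle in auto)
        qed
      qed
      have "disjnt (fmap ` X) (M.mball A m)"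
        unfolding disjnt_def
      proof (rule equals0I)
        fix y assume "y \<in> fmap ` X \<inter> M.mball A m"
        then obtain x where x: "x \<in> X" "y = fmap x" "norm_dist (BG X) (NN X d) A (fmap x) < m"
          by auto
        have "norm_dist (BG X) (NN X d) A (fmap x) = NN X d (sd A (fmap x))"
          using AC fmap_CC[OF x(1)] by (simp add: nd_eq Phi_def)
        then show False using key[OF x(1)] x(3) by simp
      qed
      then show ?thesis using mpos by blast
    qed
  qed
qed

lemma main: "\<exists>(G :: 'a set monoid) N f.
           boolean_group G \<and> ultra_norm G N \<and>
           f \<in> X \<rightarrow> carrier G \<and>
           (\<forall>x\<in>X. \<forall>y\<in>X. norm_dist G N (f x) (f y) = d x y) \<and>
           closedin (Metric_space.mtopology (carrier G) (norm_dist G N)) (f ` X)"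
  apply (rule exI[of _ "BG X"], rule exI[of _ "NN X d"], rule exI[of _ fmap])
  using BG_boolean NN_ultra_norm fmap_CC fmap_iso closed_img by auto

end

theorem corollary8p4:
  fixes X :: "'a set" and d :: "'a \<Rightarrow> 'a \<Rightarrow> real"
  assumes "ultrametric_space X d"
  shows "\<exists>(G :: 'a set monoid) N f.
           boolean_group G \<and> ultra_norm G N \<and>
           f \<in> X \<rightarrow> carrier G \<and>
           (\<forall>x\<in>X. \<forall>y\<in>X. norm_dist G N (f x) (f y) = d x y) \<and>
           closedin (Metric_space.mtopology (carrier G) (norm_dist G N)) (f ` X)"
  using main[OF assms] .

end
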